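(* Let $m\ge 2$ and $d\ge 1$ be integers, $n=md$, $a,c>0$, and $q=\frac{ad}{2c}+1$. Let $G_R$ be the $m\times m$ matrix with entries $(G_R)_{kl}=-\frac{d}{2cm}|k-l|(m-|k-l|)$. Then $G_R^{-1}+\frac{a}{m}(mI_m-J_m)$ is invertible and $$M_R:=\Bigl(G_R^{-1}+\frac{a}{m}(mI_m-J_m)\Bigr)^{-1}=\mathrm{circ}(m_1,\dots,m_m),\qquad m_j=\frac{d\,[U_{j-2}(q)+U_{m-j}(q)]}{2c\,[T_m(q)-1]}-\frac{12c+ad(m^2-1)}{12acm},\quad j=1,\dots,m.$$
   Context: $\mathrm{circ}(m_1,\dots,m_m)$ denotes the $m\times m$ circulant matrix whose $(k,l)$ entry is $m_{((l-k)\bmod m)+1}$. $I_m$ is the identity, $J_m$ the all-ones matrix. $T_k,U_k$ are the Chebyshev polynomials of the first and second kind ($T_0=1,T_1=x,U_0=1,U_1=2x$, recurrence $p_{k+1}=2xp_k-p_{k-1}$), with the convention $U_{-1}=0$. ($G_R$ is invertible for $m\ge2$.) *)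

theory Defs
  imports Complex_Main "Jordan_Normal_Form.Matrix" "Jordan_Normal_Form.Gauss_Jordan_Elimination"
begin

fun chebT :: "nat \<Rightarrow> real \<Rightarrow> real" where
  "chebT 0 x = 1"
| "chebT (Suc 0) x = x"
| "chebT (Suc (Suc k)) x = 2 * x * chebT (Suc k) x - chebT k x"

fun chebU :: "nat \<Rightarrow> real \<Rightarrow> real" where
  "chebU 0 x = 1"
| "chebU (Suc 0) x = 2 * x"
| "chebU (Suc (Suc k)) x = 2 * x * chebU (Suc k) x - chebU k x"

text \<open>U with integer index and the convention U_{-1} = 0 (only k = -1 is used below).\<close>
definition chebU_int :: "int \<Rightarrow> real \<Rightarrow> real" where
  "chebU_int k x = (if k < 0 then 0 else chebU (nat k) x)"

definition J_mat :: "nat \<Rightarrow> real mat" where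
  "J_mat m = mat m m (\<lambda>_. 1)"

text \<open>circ(c_1,...,c_m): entry (k,l) (1-based) is c_{((l-k) mod m)+1}.
  With 0-based indices i,j the same formula applies since only j-i matters.\<close>
definition circ :: "nat \<Rightarrow> (nat \<Rightarrow> real) \<Rightarrow> real mat" where
  "circ m c = mat m m (\<lambda>(i,j). c (nat ((int j - int i) mod int m) + 1))"

end

theory Submission imports Defs "Jordan_Normal_Form.Determinant" begin

lemma chebU_ge: "x \<ge> 1 \<Longrightarrow> chebU k x \<ge> 1 \<and> chebU (Suc k) x \<ge> chebU k x"
proof (induction k)
  case 0 then show ?case by simp
next
  case (Suc k)
  have a: "chebU (Suc k) x \<ge> 1" using Suc by linarith
  have "x * chebU (Suc k) x \<ge> 1 * chebU (Suc k) x"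
    by (rule mult_right_mono) (use Suc a in auto)
  moreover have "chebU (Suc (Suc k)) x = 2 * (x * chebU (Suc k) x) - chebU k x" by simp
  ultimately have "chebU (Suc (Suc k)) x \<ge> chebU (Suc k) x" using Suc by linarith
  with Suc show ?case by simp
qed

lemma chebT_U: "chebT (Suc n) x = chebU (Suc n) x - x * chebU n x \<and>
                chebT (Suc (Suc n)) x = chebU (Suc (Suc n)) x - x * chebU (Suc n) x"
proof (induction n)
  case 0 then show ?case by (simp add: algebra_simps power2_eq_square)
next
  case (Suc n)
  then have h1: "chebT (Suc n) x = chebU (Suc n) x - x * chebU n x"
    and h2: "chebT (Suc (Suc n)) x = chebU (Suc (Suc n)) x - x * chebU (Suc n) x" by blast+
  have "chebT (Suc (Suc (Suc n))) x = 2 * x * chebT (Suc (Suc n)) x - chebT (Suc n) x" by simp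
  also have "\<dots> = 2 * x * (chebU (Suc (Suc n)) x - x * chebU (Suc n) x) - (chebU (Suc n) x - x * chebU n x)"
    by (simp only: h1 h2)
  also have "\<dots> = chebU (Suc (Suc (Suc n))) x - x * chebU (Suc (Suc n)) x"
    by (simp only: chebU.simps) (simp add: algebra_simps)
  finally show ?case using h2 by simp
qed

lemma cheb_sum: "(x - 1) * (2 * (\<Sum>k<n. chebU k x) + chebU n x) = chebT (Suc n) x - 1"
proof (induction n)
  case 0 then show ?case by simp
next
  case (Suc n)
  have T1: "chebT (Suc n) x = chebU (Suc n) x - x * chebU n x" using chebT_U by blast
  have T2: "chebT (Suc (Suc n)) x = chebU (Suc (Suc n)) x - x * chebU (Suc n) x" using chebT_U by blast
  have "(x - 1) * (2 * (\<Sum>k<Suc n. chebU k x) + chebU (Suc n) x)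
     = (x - 1) * (2 * (\<Sum>k<n. chebU k x) + chebU n x) + (x-1) * (chebU n x + chebU (Suc n) x)"
    by (simp add: algebra_simps)
  also have "\<dots> = chebT (Suc (Suc n)) x - 1" using Suc T1 T2 by (simp add: algebra_simps)
  finally show ?case .
qed

lemma chebU_int_rec: "k \<ge> 0 \<Longrightarrow> chebU_int (k+1) x + chebU_int (k-1) x = 2 * x * chebU_int k x"
proof -
  assume k: "k \<ge> 0"
  show ?thesis
  proof (cases "k = 0")
    case True then show ?thesis by (simp add: chebU_int_def)
  next
    case False
    obtain n where "nat k = Suc n" using False k by (cases "nat k") auto
    then have n: "k = int (Suc n)" using k by auto
    have "nat (k+1) = Suc (Suc n)" "nat (k-1) = n" "nat k = Suc n" using n by auto
    then show ?thesis using n by (simp add: chebU_int_def)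
  qed
qed

lemma chebU_int_nat: "chebU_int (int n) x = chebU n x" by (simp add: chebU_int_def)

lemma f_D:
  fixes q :: real and m j :: nat
  assumes m: "m \<ge> 2" and j: "1 \<le> j" "j \<le> m"
  defines "f \<equiv> \<lambda>j::nat. chebU_int (int j - 2) q + chebU_int (int m - int j) q"
  shows "2*q*f j - f (if j = 1 then m else j - 1) - f (if j = m then 1 else j+1)
         = (if j = 1 then 2*(chebT m q - 1) else 0)"
proof -
  let ?u = "\<lambda>k. chebU_int k q"
  have rec: "\<And>k. k \<ge> 0 \<Longrightarrow> ?u (k+1) + ?u (k-1) = 2 * q * ?u k" by (rule chebU_int_rec)
  have um1: "?u (-1) = 0" by (simp add: chebU_int_def)
  have u0: "?u 0 = 1" by (simp add: chebU_int_def)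
  have u1: "?u 1 = 2*q" by (simp add: chebU_int_def)
  show ?thesis
  proof (cases "j = 1")
    case True
    obtain n where n: "m = Suc (Suc n)" using m by (metis add_2_eq_Suc le_Suc_ex)
    have TU: "chebT m q = chebU m q - q * chebU (Suc n) q" using chebT_U[of "Suc n" q] n by simp
    have UU: "chebU m q = 2*q*chebU (Suc n) q - chebU n q" using n by simp
    have nn: "nat (1 + int n) = Suc n" by simp
    have f1: "f 1 = chebU (Suc n) q" unfolding f_def using n by (simp add: chebU_int_def nn)
    have fm: "f m = chebU n q + 1" unfolding f_def using n by (simp add: chebU_int_def)
    have f2: "f 2 = chebU n q + 1" unfolding f_def using n by (simp add: chebU_int_def)
    have p: "(if j = 1 then m else j - 1) = m" using True by simp
    have p2: "(if j = m then 1 else j + 1) = 2" using True m by auto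
    have f2': "f (Suc (Suc 0)) = chebU n q + 1" using f2 by (simp add: numeral_2_eq_2)
    show ?thesis unfolding p p2 True using f1 fm f2 f2' TU UU m by (simp add: algebra_simps)
  next
    case False
    show ?thesis
    proof (cases "j = m")
      case True
      have a: "f (m - 1) = ?u (int m - 3) + ?u 1" unfolding f_def using m
        by (simp add: of_nat_diff algebra_simps)
      have b: "f 1 = ?u (int m - 1)" unfolding f_def by (simp add: um1)
      have c: "f m = ?u (int m - 2) + 1" unfolding f_def by (simp add: u0)
      have r: "?u (int m - 2 + 1) + ?u (int m - 2 - 1) = 2 * q * ?u (int m - 2)"
        using m by (intro rec) simp
      have e1: "int m - 2 + 1 = int m - 1" "int m - 2 - 1 = int m - 3" by simp_all
      show ?thesis using False True a b c r u1 unfolding e1 by (simp add: algebra_simps)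
    next
      case False2: False
      have a: "f (j - 1) = ?u (int j - 3) + ?u (int m - int j + 1)" unfolding f_def using j
        by (simp add: of_nat_diff algebra_simps)
      have b: "f (j + 1) = ?u (int j - 1) + ?u (int m - int j - 1)" unfolding f_def
        by (simp add: algebra_simps)
      have r1: "?u (int j - 2 + 1) + ?u (int j - 2 - 1) = 2 * q * ?u (int j - 2)"
        using j False by (intro rec) simp
      have r2: "?u (int m - int j + 1) + ?u (int m - int j - 1) = 2 * q * ?u (int m - int j)"
        using j by (intro rec) simp
      have e1: "int j - 2 + 1 = int j - 1" "int j - 2 - 1 = int j - 3" by simp_all
      show ?thesis using False False2 a b r1 r2 unfolding e1 f_def by (simp add: algebra_simps)
    qed
  qed
qed

lemma f_sum:
  fixes q :: real and m :: nat
  assumes m: "m \<ge> 1"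
  shows "(q - 1) * (\<Sum>j\<in>{1..m}. chebU_int (int j - 2) q + chebU_int (int m - int j) q)
         = chebT m q - 1"
proof -
  obtain n where n: "m = Suc n" using m by (cases m) auto
  have "(\<Sum>j\<in>{1..m}. chebU_int (int j - 2) q + chebU_int (int m - int j) q)
      = (\<Sum>k<m. chebU_int (int k - 1) q + chebU_int (int m - int k - 1) q)"
    unfolding n One_nat_def sum.atLeast_Suc_atMost_Suc_shift atLeast0AtMost lessThan_Suc_atMost[symmetric]
    by (simp add: algebra_simps)
  also have "\<dots> = (\<Sum>k<m. chebU_int (int k - 1) q) + (\<Sum>k<m. chebU (m - Suc k) q)"
    by (simp add: sum.distrib chebU_int_def of_nat_diff nat_diff_distrib)
  also have "(\<Sum>k<m. chebU_int (int k - 1) q) = (\<Sum>k<n. chebU k q)"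
    unfolding n by (subst sum.lessThan_Suc_shift) (simp add: chebU_int_def)
  also have "(\<Sum>k<m. chebU (m - Suc k) q) = (\<Sum>k<m. chebU k q)"
    by (rule sum.nat_diff_reindex)
  also have "(\<Sum>k<m. chebU k q) = (\<Sum>k<n. chebU k q) + chebU n q" unfolding n by simp
  finally show ?thesis using cheb_sum[of q n] n by (simp add: algebra_simps)
qed

lemma chebU_int_nonneg: "x \<ge> 1 \<Longrightarrow> chebU_int k x \<ge> 0"
  using chebU_ge[of x "nat k"] by (auto simp: chebU_int_def)

lemma entry_X:
  fixes m d :: nat and a c q :: real and j :: nat
  assumes m: "m \<ge> 2" and d: "d \<ge> 1" and a: "a > 0" and c: "c > 0"
    and q_def: "q = a * real d / (2 * c) + 1"
    and mR_def: "mR = (\<lambda>j::nat. real d * (chebU_int (int j - 2) q + chebU_int (int m - int j) q)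
                      / (2 * c * (chebT m q - 1))
                 - (12 * c + a * real d * (real m ^ 2 - 1)) / (12 * a * c * real m))"
    and j: "1 \<le> j" "j \<le> m"
  shows "c/d*(2*mR j - mR (if j = 1 then m else j - 1) - mR (if j = m then 1 else j+1)) + a*mR j
     - (a/m + 12*c/(d*m*(real m^2-1))) * (\<Sum>j\<in>{1..m}. mR j) = (if j = 1 then 1 else 0)"
proof -
  define f where "f = (\<lambda>j::nat. chebU_int (int j - 2) q + chebU_int (int m - int j) q)"
  define T where "T = chebT m q"
  define K where "K = real d / (2 * c * (T - 1))"
  define C0 where "C0 = - (12 * c + a * real d * (real m ^ 2 - 1)) / (12 * a * c * real m)"
  define jm where "jm = (if j = 1 then m else j - 1)"
  define jp where "jp = (if j = m then 1 else j + 1)"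
  have q1: "q - 1 = a * d / (2*c)" using q_def by simp
  have q1pos: "q - 1 > 0" unfolding q1 using a c d by simp
  have qge: "q \<ge> 1" using q1pos by simp
  have mRe: "\<And>j. mR j = K * f j + C0" unfolding mR_def K_def f_def C0_def T_def by (simp add: minus_divide_left)
  have fs: "(q - 1) * (\<Sum>j\<in>{1..m}. f j) = T - 1" unfolding f_def T_def using f_sum[of m q] m by simp
  have fnn: "\<And>j. f j \<ge> 0" unfolding f_def using chebU_int_nonneg[OF qge] by (simp add: add_nonneg_nonneg)
  have fm: "f m \<ge> 1" unfolding f_def using chebU_int_nonneg[OF qge, of "int m - 2"]
    by (simp add: chebU_int_def)
  have "f m \<le> (\<Sum>j\<in>{1..m}. f j)" by (rule member_le_sum) (use m fnn in auto)
  with fm have "(\<Sum>j\<in>{1..m}. f j) > 0" by simp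
  with fs q1pos have Tpos: "T - 1 > 0" by (metis mult_pos_pos)
  have Dj: "2*q*f j - f jm - f jp = (if j = 1 then 2*(T - 1) else 0)"
    unfolding f_def jm_def jp_def T_def using f_D[OF m j, of q] by simp
  have ha: "c/d*(2*q-2) = a" using q1 c d by (simp add: field_simps)
  have E1: "c/d*(2*mR j - mR jm - mR jp) + a*mR j = c/d*K*(2*q*f j - f jm - f jp) + a*C0"
  proof -
    have "c/d*(2*mR j - mR jm - mR jp) + a*mR j = c/d*K*(2*f j - f jm - f jp) + a*K*f j + a*C0"
      by (simp add: mRe algebra_simps add_divide_distrib)
    also have "\<dots> = c/d*K*(2*f j - f jm - f jp) + (c/d*(2*q-2))*K*f j + a*C0" unfolding ha ..
    also have "\<dots> = c/d*K*(2*q*f j - f jm - f jp) + a*C0" by (simp add: algebra_simps)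
    finally show ?thesis .
  qed
  have S: "(\<Sum>j\<in>{1..m}. mR j) = K * (\<Sum>j\<in>{1..m}. f j) + m * C0"
    by (simp add: mRe sum.distrib sum_distrib_left)
  have Sf: "(\<Sum>j\<in>{1..m}. f j) = (T - 1) / (q - 1)" using fs q1pos by (simp add: field_simps)
  have m2: "real m ^ 2 - 1 > 0" using m 
  proof -
    have "real m \<ge> 2" using m by simp
    then have "real m * real m \<ge> 2 * 2" by (intro mult_mono) auto
    then show ?thesis by (simp add: power2_eq_square)
  qed
  have dpos: "real d > 0" using d by simp
  have mpos: "real m > 0" using m by simp
  have F1: "c/d*K*(2*(T-1)) = 1" unfolding K_def using Tpos c dpos by (simp add: field_simps)
  have F2a: "K*((T-1)/(q-1)) = 1/a" unfolding K_def q1 using Tpos c dpos a by (simp add: field_simps)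
  have F2: "a*C0 - (a/m + 12*c/(d*m*(real m^2-1))) * (1/a + m*C0) = 0"
    unfolding C0_def using a c dpos mpos m2 by (simp add: field_simps)
  show ?thesis
    unfolding jm_def[symmetric] jp_def[symmetric] E1 Dj S Sf F2a using F1 F2 by auto
qed

lemma sum_rm: fixes M :: real and n :: nat shows "(\<Sum>r<n. real r * (M - real r)) = M * real n * (real n - 1) / 2 - (real n - 1) * real n * (2 * real n - 1) / 6"
  by (induction n) (simp_all add: field_simps power2_eq_square)

lemma entry_G:
  fixes m d :: nat and c :: real and r :: nat
  assumes m: "m \<ge> 2" and d: "d \<ge> 1" and c: "c > 0" and r: "r < m"
    and g_def: "g = (\<lambda>t::nat. - (real d / (2 * c * real m)) * real t * (real m - real t))"
  shows "c/real d*(2*g r - g (if r = 0 then m - 1 else r - 1) - g (if r = m - 1 then 0 else r + 1))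
          - 12*c/(real d*real m*(real m^2-1)) * (\<Sum>t<m. g t) = (if r = 0 then 1 else 0)"
proof -
  have dpos: "real d > 0" using d by simp
  have mpos: "real m > 0" using m by simp
  have m2: "real m ^ 2 - 1 > 0"
  proof -
    have "real m \<ge> 2" using m by simp
    then have "real m * real m \<ge> 2 * 2" by (intro mult_mono) auto
    then show ?thesis by (simp add: power2_eq_square)
  qed
  have sg: "(\<Sum>t<m. g t) = - (real d / (2 * c * real m)) * (real m * real m * (real m - 1) / 2 - (real m - 1) * real m * (2 * real m - 1) / 6)"
  proof -
    have "(\<Sum>t<m. g t) = - (real d / (2 * c * real m)) * (\<Sum>t<m. real t * (real m - real t))"
      unfolding g_def sum_distrib_left by (simp only: mult.assoc)
    then show ?thesis using sum_rm[of "real m" m] by simp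
  qed
  have s2: "12*c/(real d*real m*(real m^2-1)) * (\<Sum>t<m. g t) = - 1 / real m"
    unfolding sg using dpos mpos m2 c by (simp add: field_simps power2_eq_square)
  have L: "c/real d*(2*g r - g (if r = 0 then m - 1 else r - 1) - g (if r = m - 1 then 0 else r + 1))
     = (if r = 0 then 1 else 0) - 1/real m"
  proof (cases "r = 0")
    case True
    have "m - 1 \<noteq> 0" using m by simp
    then show ?thesis using True m dpos mpos c unfolding g_def by (simp add: of_nat_diff field_simps)
  next
    case False
    show ?thesis
    proof (cases "r = m - 1")
      case True
      have "r - 1 + 1 = r" using False by simp
      then show ?thesis using True False m dpos mpos c unfolding g_def
        by (simp add: of_nat_diff field_simps)
    next
      case False2: False
      then show ?thesis using False r dpos mpos c unfolding g_def
        by (simp add: of_nat_diff field_simps)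
    qed
  qed
  show ?thesis unfolding L s2 by simp
qed

lemma nb_eq:
  fixes i l m :: nat assumes "i < m" "l < m"
  shows "(i = (l+1) mod m) = (l = (i+m-1) mod m)"
proof (cases "l + 1 = m")
  case True
  then have "(l+1) mod m = 0" by simp
  moreover have "(i+m-1) mod m = (if i = 0 then m - 1 else i - 1)"
    using assms by (cases "i = 0") (auto simp: mod_if)
  ultimately show ?thesis using assms True by auto
next
  case False
  then have "(l+1) mod m = l + 1" using assms by simp
  moreover have "(i+m-1) mod m = (if i = 0 then m - 1 else i - 1)"
    using assms by (cases "i = 0") (auto simp: mod_if)
  ultimately show ?thesis using assms False by auto
qed

lemma M1: fixes s M :: int assumes "0 \<le> s" "s < M"
  shows "(s - 1) mod M = (if s = 0 then M - 1 else s - 1)"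
proof (cases "s = 0")
  case True
  have "(s - 1) mod M = (s - 1 + M) mod M" by simp
  also have "\<dots> = s - 1 + M" using True assms by (intro mod_pos_pos_trivial) auto
  finally show ?thesis using True by simp
qed (use assms in simp)

lemma M2: fixes s M :: int assumes "0 \<le> s" "s < M"
  shows "(s + 1) mod M = (if s = M - 1 then 0 else s + 1)"
  using assms by (auto simp: zmod_trivial_iff)

lemma M3: fixes i k m :: nat
  shows "(int k - int ((i+1) mod m)) mod int m = ((int k - int i) mod int m - 1) mod int m"
  by (simp add: of_nat_mod mod_diff_right_eq mod_diff_left_eq algebra_simps)

lemma M4: fixes i k m :: nat assumes "m \<ge> 1"
  shows "(int k - int ((i+m-1) mod m)) mod int m = ((int k - int i) mod int m + 1) mod int m"
proof -
  have "int (i+m-1) = (int i - 1) + int m" using assms by simp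
  then have "int ((i+m-1) mod m) = (int i - 1) mod int m" by (simp add: of_nat_mod)
  then have "(int k - int ((i+m-1) mod m)) mod int m = (1 + (int k - int i)) mod int m"
    by (simp add: mod_diff_right_eq algebra_simps)
  also have "\<dots> = (1 + (int k - int i) mod int m) mod int m" by (simp add: mod_add_right_eq)
  finally show ?thesis by (simp add: algebra_simps)
qed

lemma M5: fixes i k m :: nat assumes "m \<ge> 1"
  shows "(int ((k+m-1) mod m) - int i) mod int m = ((int k - int i) mod int m - 1) mod int m"
proof -
  have "int (k+m-1) = (int k - 1) + int m" using assms by simp
  then have "int ((k+m-1) mod m) = (int k - 1) mod int m" by (simp add: of_nat_mod)
  then show ?thesis by (simp add: mod_diff_left_eq algebra_simps)
qed

lemma M6: fixes i k m :: nat
  shows "(int ((k+1) mod m) - int i) mod int m = ((int k - int i) mod int m + 1) mod int m"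
proof -
  have "(int ((k+1) mod m) - int i) mod int m = (1 + (int k - int i)) mod int m"
    by (simp add: of_nat_mod mod_diff_left_eq algebra_simps)
  also have "\<dots> = (1 + (int k - int i) mod int m) mod int m" by (simp add: mod_add_right_eq)
  finally show ?thesis by (simp add: algebra_simps)
qed

definition Lent :: "nat \<Rightarrow> nat \<Rightarrow> nat \<Rightarrow> real" where
  "Lent m i j = (if j = i then 2 else 0) - (if j = (i+1) mod m then 1 else 0) - (if i = (j+1) mod m then 1 else 0)"

lemma Lsum_right:
  fixes A :: "nat \<Rightarrow> real" assumes k: "k < m"
  shows "(\<Sum>l\<in>{0..<m}. A l * Lent m l k) = 2*A k - A ((k+m-1) mod m) - A ((k+1) mod m)"
proof -
  have m0: "m > 0" using k by simp
  have "(\<Sum>l\<in>{0..<m}. A l * Lent m l k) = (\<Sum>l\<in>{0..<m}. (if l = k then 2 * A l else 0)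
     - (if l = (k+m-1) mod m then A l else 0) - (if l = (k+1) mod m then A l else 0))"
  proof (rule sum.cong)
    fix l assume l: "l \<in> {0..<m}"
    have "(k = (l+1) mod m) = (l = (k+m-1) mod m)" using nb_eq[of k m l] k l by simp
    then show "A l * Lent m l k = (if l = k then 2 * A l else 0)
     - (if l = (k+m-1) mod m then A l else 0) - (if l = (k+1) mod m then A l else 0)"
      unfolding Lent_def by (auto simp: algebra_simps)
  qed simp
  also have "\<dots> = 2*A k - A ((k+m-1) mod m) - A ((k+1) mod m)"
    using k m0 by (simp add: sum_subtractf sum.delta)
  finally show ?thesis .
qed

lemma Lsum_left:
  fixes B :: "nat \<Rightarrow> real" assumes i: "i < m"
  shows "(\<Sum>l\<in>{0..<m}. Lent m i l * B l) = 2*B i - B ((i+1) mod m) - B ((i+m-1) mod m)"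
proof -
  have m0: "m > 0" using i by simp
  have "(\<Sum>l\<in>{0..<m}. Lent m i l * B l) = (\<Sum>l\<in>{0..<m}. (if l = i then 2 * B l else 0)
     - (if l = (i+1) mod m then B l else 0) - (if l = (i+m-1) mod m then B l else 0))"
  proof (rule sum.cong)
    fix l assume l: "l \<in> {0..<m}"
    have "(i = (l+1) mod m) = (l = (i+m-1) mod m)" using nb_eq[of i m l] i l by simp
    then show "Lent m i l * B l = (if l = i then 2 * B l else 0)
     - (if l = (i+1) mod m then B l else 0) - (if l = (i+m-1) mod m then B l else 0)"
      unfolding Lent_def by (auto simp: algebra_simps)
  qed simp
  also have "\<dots> = 2*B i - B ((i+1) mod m) - B ((i+m-1) mod m)"
    using i m0 by (simp add: sum_subtractf sum.delta)
  finally show ?thesis .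
qed

lemma BJ1:
  fixes h :: "nat \<Rightarrow> 'b::comm_monoid_add" assumes k: "k < m"
  shows "(\<Sum>l\<in>{0..<m}. h (nat ((int k - int l) mod int m))) = (\<Sum>r\<in>{0..<m}. h r)"
proof -
  have m0: "int m > 0" using k by simp
  have inv: "nat ((int k - int (nat ((int k - int a) mod int m))) mod int m) = a" if a: "a < m" for a
  proof -
    have "int (nat ((int k - int (nat ((int k - int a) mod int m))) mod int m)) = (int k - int (nat ((int k - int a) mod int m))) mod int m"
      using m0 by simp
    also have "\<dots> = (int k - (int k - int a) mod int m) mod int m" using m0 by simp
    also have "\<dots> = int a" using a by (simp add: mod_diff_right_eq)
    finally show ?thesis by linarith
  qed
  have rng: "nat ((int k - int a) mod int m) < m" for a using m0 by (simp add: nat_less_iff)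
  show ?thesis
    by (rule sum.reindex_bij_witness[where i = "\<lambda>r. nat ((int k - int r) mod int m)" and j = "\<lambda>l. nat ((int k - int l) mod int m)"])
       (use inv rng in auto)
qed

lemma BJ2:
  fixes h :: "nat \<Rightarrow> 'b::comm_monoid_add" assumes i: "i < m"
  shows "(\<Sum>l\<in>{0..<m}. h (nat ((int l - int i) mod int m))) = (\<Sum>r\<in>{0..<m}. h r)"
proof (rule sum.reindex_bij_witness[where i = "\<lambda>r. (r + i) mod m" and j = "\<lambda>l. nat ((int l - int i) mod int m)"])
  have m0: "int m > 0" using i by simp
  fix a assume a: "a \<in> {0..<m}"
  have "int ((nat ((int a - int i) mod int m) + i) mod m) = ((int a - int i) mod int m + int i) mod int m"
    using m0 by (simp add: of_nat_mod)
  also have "\<dots> = int a" using a by (simp add: mod_add_left_eq)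
  finally show "(nat ((int a - int i) mod int m) + i) mod m = a" by linarith
  show "nat ((int a - int i) mod int m) \<in> {0..<m}" using m0 by (simp add: nat_less_iff)
next
  have m0: "int m > 0" using i by simp
  fix b assume b: "b \<in> {0..<m}"
  have "int (nat ((int ((b + i) mod m) - int i) mod int m)) = (int ((b + i) mod m) - int i) mod int m"
    using m0 by simp
  also have "\<dots> = ((int b + int i) mod int m - int i) mod int m" by (simp add: of_nat_mod)
  also have "\<dots> = int b" using b by (simp add: mod_diff_left_eq)
  finally show "nat ((int ((b + i) mod m) - int i) mod int m) = b" by linarith
  show "(b + i) mod m \<in> {0..<m}" using m0 by simp
qed simp

lemma inv_some:
  fixes A B :: "real mat"
  assumes A: "A \<in> carrier_mat n n" and B: "B \<in> carrier_mat n n" and AB: "A * B = 1\<^sub>m n"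
  shows "mat_inverse A = Some B"
proof -
  have BA: "B * A = 1\<^sub>m n" using mat_mult_left_right_inverse[OF A B AB] .
  have "det A \<noteq> 0" using det_mult[OF A B] AB by auto
  hence U: "A \<in> Units (ring_mat TYPE(real) n undefined)" using det_non_zero_imp_unit[OF A] by auto
  have "mat_inverse A \<noteq> None" using mat_inverse(1)[OF A, where b=undefined] U by blast
  then obtain B' where S: "mat_inverse A = Some B'" by auto
  from mat_inverse(2)[OF A S] have B'A: "B' * A = 1\<^sub>m n" and B': "B' \<in> carrier_mat n n" by auto
  have "B' = B' * (A * B)" using AB B' by simp
  also have "\<dots> = (B' * A) * B" using assoc_mult_mat[OF B' A B] by simp
  also have "\<dots> = B" using B'A B by simp
  finally show ?thesis using S by simp
qed

lemma mult_entry: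
  fixes A B :: "real mat" assumes "A \<in> carrier_mat m m" "B \<in> carrier_mat m m" "i < m" "k < m"
  shows "(A * B) $$ (i,k) = (\<Sum>l\<in>{0..<m}. A $$ (i,l) * B $$ (l,k))"
  using assms by (simp add: scalar_prod_def)

lemma nat_abs_cases:
  fixes i l m :: nat assumes "i < m" "l < m"
  shows "real (nat \<bar>int i - int l\<bar>) = real (nat ((int l - int i) mod int m)) \<or>
         real (nat \<bar>int i - int l\<bar>) = real m - real (nat ((int l - int i) mod int m))"
proof (cases "i \<le> l")
  case True
  then have "(int l - int i) mod int m = int l - int i" using assms by (intro mod_pos_pos_trivial) auto
  then show ?thesis using True by simp
next
  case False
  then have "(int l - int i) mod int m = int l - int i + int m"
    using assms by (subst mod_pos_pos_trivial[symmetric, of "int l - int i + int m" "int m"]) auto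
  then show ?thesis using False assms by (simp add: of_nat_diff)
qed

theorem lemma4p2:
  fixes m d :: nat and a c :: real
  assumes "m \<ge> 2" and "d \<ge> 1" and "a > 0" and "c > 0"
  defines "q \<equiv> a * real d / (2 * c) + 1"
  defines "G \<equiv> mat m m (\<lambda>(k,l). - (real d / (2 * c * real m)) *
                 real (nat \<bar>int k - int l\<bar>) * (real m - real (nat \<bar>int k - int l\<bar>)))"
  defines "mR \<equiv> (\<lambda>j::nat. real d * (chebU_int (int j - 2) q + chebU_int (int m - int j) q)
                      / (2 * c * (chebT m q - 1))
                 - (12 * c + a * real d * (real m ^ 2 - 1)) / (12 * a * c * real m))"
  shows "\<exists>Ginv. mat_inverse G = Some Ginv \<and>
           mat_inverse (Ginv + (a / real m) \<cdot>\<^sub>m (real m \<cdot>\<^sub>m 1\<^sub>m m - J_mat m)) = Some (circ m mR)"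
proof -
  note m = assms(1) and d = assms(2) and a = assms(3) and c = assms(4)
  have m0: "m > 0" using m by simp
  have m1: "m \<ge> 1" using m by simp
  define \<gamma> where "\<gamma> = 12*c/(real d*real m*(real m^2-1))"
  define Ginv where "Ginv = mat m m (\<lambda>(i,j). c/real d * Lent m i j - \<gamma>)"
  define g where "g = (\<lambda>t::nat. -(real d/(2*c*real m)) * real t * (real m - real t))"
  have Gc: "G \<in> carrier_mat m m" unfolding G_def by simp
  have Gic: "Ginv \<in> carrier_mat m m" unfolding Ginv_def by simp
  have Gent: "G $$ (i,l) = g (nat ((int l - int i) mod int m))" if "i < m" "l < m" for i l
  proof -
    define t where "t = real (nat \<bar>int i - int l\<bar>)"
    define rr where "rr = real (nat ((int l - int i) mod int m))"
    have h1: "G $$ (i,l) = -(real d/(2*c*real m)) * t * (real m - t)" unfolding G_def t_def using that by simp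
    have h2: "g (nat ((int l - int i) mod int m)) = -(real d/(2*c*real m)) * rr * (real m - rr)"
      unfolding g_def rr_def by simp
    have disj: "t = rr \<or> t = real m - rr" unfolding t_def rr_def by (rule nat_abs_cases[OF that])
    have key: "t * (real m - t) = rr * (real m - rr)"
    proof (cases "t = rr")
      case False
      then have e: "t = real m - rr" using disj by simp
      show ?thesis unfolding e by (simp add: algebra_simps)
    qed simp
    show ?thesis unfolding h1 h2 using key by (simp add: mult.assoc)
  qed
  have GG: "G * Ginv = 1\<^sub>m m"
  proof (rule eq_matI)
    fix i k assume i: "i < dim_row (1\<^sub>m m :: real mat)" and k: "k < dim_col (1\<^sub>m m :: real mat)"
    then have i: "i < m" and k: "k < m" by auto
    define s where "s = (int k - int i) mod int m"
    define r where "r = nat s"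
    have s0: "0 \<le> s" "s < int m" unfolding s_def using m0 by auto
    have rm: "r < m" unfolding r_def using s0 by linarith
    have rs: "int r = s" unfolding r_def using s0 by simp
    have e1: "nat ((int ((k+m-1) mod m) - int i) mod int m) = (if r = 0 then m - 1 else r - 1)"
      unfolding M5[OF m1] s_def[symmetric] M1[OF s0] using rs m0 by auto
    have e2: "nat ((int ((k+1) mod m) - int i) mod int m) = (if r = m - 1 then 0 else r + 1)"
      unfolding M6 s_def[symmetric] M2[OF s0] using rs m0 by auto
    have e0: "nat ((int k - int i) mod int m) = r" unfolding r_def s_def ..
    have "(G * Ginv) $$ (i,k) = (\<Sum>l\<in>{0..<m}. G $$ (i,l) * Ginv $$ (l,k))"
      by (rule mult_entry[OF Gc Gic i k])
    also have "\<dots> = (\<Sum>l\<in>{0..<m}. c/real d * (g (nat ((int l - int i) mod int m)) * Lent m l k)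
                       - \<gamma> * g (nat ((int l - int i) mod int m)))"
      by (rule sum.cong) (use i k in \<open>auto simp: Gent Ginv_def algebra_simps\<close>)
    also have "\<dots> = c/real d * (\<Sum>l\<in>{0..<m}. g (nat ((int l - int i) mod int m)) * Lent m l k)
                   - \<gamma> * (\<Sum>l\<in>{0..<m}. g (nat ((int l - int i) mod int m)))"
      by (simp add: sum_subtractf sum_distrib_left)
    also have "(\<Sum>l\<in>{0..<m}. g (nat ((int l - int i) mod int m)) * Lent m l k)
       = 2 * g r - g (if r = 0 then m - 1 else r - 1) - g (if r = m - 1 then 0 else r + 1)"
      using Lsum_right[OF k, of "\<lambda>l. g (nat ((int l - int i) mod int m))"] e0 e1 e2 by simp
    also have "(\<Sum>l\<in>{0..<m}. g (nat ((int l - int i) mod int m))) = (\<Sum>t<m. g t)"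
      using BJ2[OF i, of g] by (simp add: atLeast0LessThan)
    also have "c/real d * (2 * g r - g (if r = 0 then m - 1 else r - 1) - g (if r = m - 1 then 0 else r + 1))
      - \<gamma> * (\<Sum>t<m. g t) = (if r = 0 then 1 else 0)"
      unfolding \<gamma>_def by (rule entry_G[OF m d c rm g_def])
    also have "(r = 0) = (i = k)"
    proof
      assume "r = 0"
      then have "(int k - int i) mod int m = 0" using rs s_def by simp
      then have dv0: "int m dvd (int k - int i)" by (simp add: mod_eq_0_iff_dvd)
      then have dv: "int m dvd (int k - int i)" .
      show "i = k"
      proof (rule ccontr)
        assume "i \<noteq> k"
        then have "int k - int i \<noteq> 0" by simp
        from dvd_imp_le_int[OF this dv] have "\<bar>int m\<bar> \<le> \<bar>int k - int i\<bar>" .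
        with i k show False by simp
      qed
    qed (use rs s_def in simp)
    finally show "(G * Ginv) $$ (i,k) = 1\<^sub>m m $$ (i,k)" using i k by simp
  qed (use Gc Gic in auto)
  have invG: "mat_inverse G = Some Ginv" by (rule inv_some[OF Gc Gic GG])
  define X where "X = Ginv + (a / real m) \<cdot>\<^sub>m (real m \<cdot>\<^sub>m 1\<^sub>m m - J_mat m)"
  have Xc: "X \<in> carrier_mat m m" unfolding X_def Ginv_def J_mat_def carrier_mat_def by simp
  have Cc: "circ m mR \<in> carrier_mat m m" unfolding circ_def by simp
  have Xent: "X $$ (i,l) = c/real d * Lent m i l + (if l = i then a else 0) - (\<gamma> + a / real m)"
    if "i < m" "l < m" for i l
    using that m0 unfolding X_def Ginv_def J_mat_def by (auto simp: algebra_simps)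
  have Cent: "circ m mR $$ (l,k) = mR (nat ((int k - int l) mod int m) + 1)" if "l < m" "k < m" for l k
    using that unfolding circ_def by simp
  have XC: "X * circ m mR = 1\<^sub>m m"
  proof (rule eq_matI)
    fix i k assume i: "i < dim_row (1\<^sub>m m :: real mat)" and k: "k < dim_col (1\<^sub>m m :: real mat)"
    then have i: "i < m" and k: "k < m" by auto
    define B where "B = (\<lambda>l. mR (nat ((int k - int l) mod int m) + 1))"
    define s where "s = (int k - int i) mod int m"
    define r where "r = nat s"
    have s0: "0 \<le> s" "s < int m" unfolding s_def using m0 by auto
    have rm: "r < m" unfolding r_def using s0 by linarith
    have rs: "int r = s" unfolding r_def using s0 by simp
    have e1: "nat ((int k - int ((i+1) mod m)) mod int m) + 1 = (if r + 1 = 1 then m else r + 1 - 1)"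
      unfolding M3 s_def[symmetric] M1[OF s0] using rs m0 by auto
    have e2: "nat ((int k - int ((i+m-1) mod m)) mod int m) + 1 = (if r + 1 = m then 1 else r + 1 + 1)"
      unfolding M4[OF m1] s_def[symmetric] M2[OF s0] using rs m0 by auto
    have e0: "nat ((int k - int i) mod int m) = r" unfolding r_def s_def ..
    have "(X * circ m mR) $$ (i,k) = (\<Sum>l\<in>{0..<m}. X $$ (i,l) * circ m mR $$ (l,k))"
      by (rule mult_entry[OF Xc Cc i k])
    also have "\<dots> = (\<Sum>l\<in>{0..<m}. c/real d * (Lent m i l * B l) + (if l = i then a * B l else 0)
                       - (\<gamma> + a / real m) * B l)"
      by (rule sum.cong) (use i k in \<open>auto simp: Xent Cent B_def algebra_simps\<close>)
    also have "\<dots> = c/real d * (\<Sum>l\<in>{0..<m}. Lent m i l * B l) + a * B i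
                   - (\<gamma> + a / real m) * (\<Sum>l\<in>{0..<m}. B l)"
      using i by (simp add: sum_subtractf sum.distrib sum_distrib_left sum.delta)
    also have "(\<Sum>l\<in>{0..<m}. Lent m i l * B l) = 2 * B i - B ((i+1) mod m) - B ((i+m-1) mod m)"
      by (rule Lsum_left[OF i])
    also have "(\<Sum>l\<in>{0..<m}. B l) = (\<Sum>j\<in>{1..m}. mR j)"
    proof -
      have "(\<Sum>l\<in>{0..<m}. B l) = (\<Sum>r\<in>{0..<m}. mR (r + 1))"
        unfolding B_def using BJ1[OF k, of "\<lambda>r. mR (r+1)"] by simp
      also have "\<dots> = (\<Sum>j\<in>{1..m}. mR j)"
        using sum.atLeast_Suc_atMost_Suc_shift[of mR 0 "m - 1"] m0
        by (simp add: atLeastLessThanSuc_atLeastAtMost[symmetric] atLeast0LessThan)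
      finally show ?thesis .
    qed
    also have "B i = mR (r + 1)" unfolding B_def e0 ..
    also have "B ((i+1) mod m) = mR (if r + 1 = 1 then m else r + 1 - 1)" unfolding B_def e1 ..
    also have "B ((i+m-1) mod m) = mR (if r + 1 = m then 1 else r + 1 + 1)" unfolding B_def e2 ..
    also have "c / real d * (2 * mR (r + 1) - mR (if r + 1 = 1 then m else r + 1 - 1) - mR (if r + 1 = m then 1 else r + 1 + 1)) +
      a * mR (r + 1) - (\<gamma> + a / real m) * (\<Sum>j\<in>{1..m}. mR j) = (if r + 1 = 1 then 1 else 0)"
      using entry_X[OF m d a c q_def[THEN meta_eq_to_obj_eq] mR_def[THEN meta_eq_to_obj_eq], of "r+1"] rm unfolding \<gamma>_def by (simp add: algebra_simps)
    also have "(r + 1 = 1) = (i = k)"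
    proof
      assume "r + 1 = 1"
      then have "(int k - int i) mod int m = 0" using rs s_def by simp
      then have dv: "int m dvd (int k - int i)" by (simp add: mod_eq_0_iff_dvd)
      show "i = k"
      proof (rule ccontr)
        assume "i \<noteq> k"
        then have "int k - int i \<noteq> 0" by simp
        from dvd_imp_le_int[OF this dv] have "\<bar>int m\<bar> \<le> \<bar>int k - int i\<bar>" .
        with i k show False by simp
      qed
    qed (use rs s_def in simp)
    finally show "(X * circ m mR) $$ (i,k) = 1\<^sub>m m $$ (i,k)" using i k by simp
  qed (use Xc Cc in auto)
  have invX: "mat_inverse X = Some (circ m mR)" by (rule inv_some[OF Xc Cc XC])
  show ?thesis using invG invX unfolding X_def by blast
qed

end
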